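(* For any positive numbers $c_1,c_2$, any $t\ge0$, and any nonnegative numbers $B_0,B_1,\dots,B_t$, \[ c_1\sqrt{\sum_{k=0}^tB_k^2}-\sum_{k=0}^t\frac{B_k^2}{c_2}\sqrt{\sum_{j=0}^kB_j^2}\le 2c_1^{3/2}c_2^{1/2}. \] *)

theory Defs
  imports Complex_Main
begin

end

theory Submission
  imports Defs
begin

lemma cube_step:
  fixes u v :: real
  assumes "0 \<le> v" "v \<le> u"
  shows "u^3 - v^3 \<le> 2 * ((u^2 - v^2) * u)"
proof -
  have "0 \<le> (u - v) * (u^2 + u*v - v^2)"
  proof (rule mult_nonneg_nonneg)
    show "0 \<le> u - v" using assms by simp
    have "v*v \<le> u*u" using assms by (intro mult_mono) auto
    moreover have "0 \<le> u*v" using assms by simp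
    ultimately show "0 \<le> u^2 + u*v - v^2" by (simp add: power2_eq_square)
  qed
  thus ?thesis by (simp add: algebra_simps power2_eq_square power3_eq_cube)
qed

lemma sum_bound:
  fixes B :: "nat \<Rightarrow> real"
  shows "(sqrt (\<Sum>j=0..n. (B j)^2))^3 \<le> 2 * (\<Sum>k=0..n. (B k)^2 * sqrt (\<Sum>j=0..k. (B j)^2))"
proof (induction n)
  case 0
  have "(sqrt ((B 0)^2))^3 = (B 0)^2 * sqrt ((B 0)^2)"
    by (simp add: power3_eq_cube power2_eq_square)
  moreover have "0 \<le> (B 0)^2 * sqrt ((B 0)^2)" by simp
  ultimately show ?case by simp
next
  case (Suc n)
  define S where "S = (\<Sum>j=0..n. (B j)^2)"
  have S0: "0 \<le> S" unfolding S_def by (simp add: sum_nonneg)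
  have SS: "(\<Sum>j=0..Suc n. (B j)^2) = S + (B (Suc n))^2" unfolding S_def by simp
  have "(sqrt (S + (B (Suc n))^2))^3 - (sqrt S)^3
        \<le> 2 * (((sqrt (S + (B (Suc n))^2))^2 - (sqrt S)^2) * sqrt (S + (B (Suc n))^2))"
    by (rule cube_step) (use S0 in auto)
  also have "\<dots> = 2 * ((B (Suc n))^2 * sqrt (S + (B (Suc n))^2))"
    using S0 by simp
  finally show ?case using Suc.IH unfolding S_def[symmetric] SS by (simp add: S_def)
qed

theorem lemma27:
  fixes c1 c2 :: real and t :: nat and B :: "nat \<Rightarrow> real"
  assumes "c1 > 0" and "c2 > 0"
    and "\<And>k. k \<le> t \<Longrightarrow> B k \<ge> 0"
  shows "c1 * sqrt (\<Sum>k=0..t. (B k)^2)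
           - (\<Sum>k=0..t. ((B k)^2 / c2) * sqrt (\<Sum>j=0..k. (B j)^2))
         \<le> 2 * c1 powr (3/2) * c2 powr (1/2)"
proof -
  define u where "u = sqrt (\<Sum>k=0..t. (B k)^2)"
  define T where "T = (\<Sum>k=0..t. (B k)^2 * sqrt (\<Sum>j=0..k. (B j)^2))"
  have u0: "0 \<le> u" unfolding u_def by (simp add: sum_nonneg)
  have uT: "u^3 \<le> 2 * T" unfolding u_def T_def by (rule sum_bound)
  have eq: "(\<Sum>k=0..t. ((B k)^2 / c2) * sqrt (\<Sum>j=0..k. (B j)^2)) = T / c2"
    unfolding T_def by (simp add: sum_divide_distrib)
  have r: "c1 powr (3/2) * c2 powr (1/2) = c1 * sqrt (c1 * c2)"
  proof -
    have "c1 powr (3/2) = c1 powr (1 + 1/2)" by simp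
    also have "\<dots> = c1 * sqrt c1" using assms(1) by (simp only: powr_add powr_half_sqrt powr_one_gt_zero_iff powr_one)
    finally show ?thesis using assms by (simp add: powr_half_sqrt real_sqrt_mult)
  qed
  define w where "w = sqrt (c1 * c2)"
  have w0: "0 \<le> w" unfolding w_def using assms by simp
  have w2: "w^2 = c1 * c2" unfolding w_def using assms by simp
  have main: "c1 * u - T / c2 \<le> 2 * (c1 * w)"
  proof (cases "u \<le> 2 * w")
    case True
    have "T \<ge> 0" using uT u0 by (smt (verit) zero_le_power)
    hence "T / c2 \<ge> 0" using assms by simp
    moreover have "c1 * u \<le> c1 * (2 * w)" using True assms by simp
    ultimately show ?thesis by simp
  next
    case False
    hence "u^2 \<ge> (2*w)^2" using w0 by (intro power_mono) auto
    hence "u^2 \<ge> 4 * c1 * c2" using w2 by (simp add: power_mult_distrib)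
    hence "u^3 \<ge> 4 * c1 * c2 * u" using u0
      by (metis mult.commute mult_right_mono power2_eq_square power3_eq_cube mult.assoc)
    hence "2 * T \<ge> 4 * c1 * c2 * u" using uT by linarith
    hence "T / c2 \<ge> 2 * c1 * u" using assms by (simp add: field_simps)
    moreover have "c1 * u \<ge> 0" using u0 assms by simp
    moreover have "c1 * w \<ge> 0" using w0 assms by simp
    ultimately show ?thesis by linarith
  qed
  have "2 * c1 powr (3/2) * c2 powr (1/2) = 2 * (c1 * w)"
    using r unfolding w_def by (simp add: mult.assoc)
  then show ?thesis using main unfolding eq u_def T_def by simp
qed

end
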